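(* Let $\mathcal{C}$ be a 3XOR instance with $\mathrm{val}(\mathcal{C})\ge 1-\epsilon$. Then $\mathrm{GI}(G_{\mathcal{C}},G_{\mathcal{C}^0})\ge 1-2\epsilon/3$.
   Context: A 3XOR instance $\mathcal{C}=(C_1,\dots,C_m)$ over a variable set $\mathcal{X}$ with $|\mathcal{X}|=n$ consists of equations $C_i: x_{j_1}+x_{j_2}+x_{j_3}=b$ over $\mathbb{Z}_2$ on three distinct variables. $\mathrm{val}(\mathcal{C})$ is the maximum over assignments $\tau:\mathcal{X}\to\mathbb{Z}_2$ of the fraction of satisfied equations. The homogeneous version $C^0$ of $C$ is the same equation with right-hand side $0$, and $\mathcal{C}^0=\{C^0:C\in\mathcal{C}\}$. Graph $G_{\mathcal{C}}$: for each variable $x$ there are two "variable vertices" $x\mapsto 0$, $x\mapsto 1$ joined by an edge. For each equation $C$ on $x_1,x_2,x_3$ there are 4 "constraint vertices" $\alpha_C$, one for each assignment $\alpha=(x_1\mapsto a_1,x_2\mapsto a_2,x_3\mapsto a_3)$ satisfying $C$ (distinct constraints get distinct constraint vertices); these 4 vertices form a clique, and each $\alpha_C$ is adjacent to the three variable vertices $x_i\mapsto a_i$ consistent with it. Variable vertices are shared among all constraints. Thus $G_{\mathcal{C}}$ has $4m+2n$ vertices and $18m+n$ edges. For graphs $G,H$ on equally many vertices, $\mathrm{GI}(G,H)=\max_{\pi}\frac{|\{e\in E(G):\pi(e)\in E(H)\}|}{\max\{|E(G)|,|E(H)|\}}$ over bijections $\pi:V(G)\to V(H)$. *)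

theory Defs
  imports Complex_Main
begin

text \<open>Z_2 is modelled by bool: False = 0, True = 1, addition = exclusive or.\<close>

definition z2add :: "bool \<Rightarrow> bool \<Rightarrow> bool" where
  "z2add a b = (a \<noteq> b)"

text \<open>A 3XOR equation x_{j1} + x_{j2} + x_{j3} = b: a triple of variables and a right-hand side.\<close>
type_synonym 'v eqn = "('v \<times> 'v \<times> 'v) \<times> bool"

definition eq_vars :: "'v eqn \<Rightarrow> 'v set" where
  "eq_vars C = (case C of ((x1,x2,x3),b) \<Rightarrow> {x1,x2,x3})"

definition is_3xor :: "'v set \<Rightarrow> 'v eqn list \<Rightarrow> bool" where
  "is_3xor X Cs \<longleftrightarrow> finite X \<and>
     (\<forall>C\<in>set Cs. case C of ((x1,x2,x3),b) \<Rightarrow>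
        x1 \<in> X \<and> x2 \<in> X \<and> x3 \<in> X \<and> x1 \<noteq> x2 \<and> x1 \<noteq> x3 \<and> x2 \<noteq> x3)"

definition sat_local :: "'v eqn \<Rightarrow> bool \<times> bool \<times> bool \<Rightarrow> bool" where
  "sat_local C \<alpha> = (case C of ((x1,x2,x3),b) \<Rightarrow> case \<alpha> of (a1,a2,a3) \<Rightarrow>
      z2add (z2add a1 a2) a3 = b)"

definition sat :: "('v \<Rightarrow> bool) \<Rightarrow> 'v eqn \<Rightarrow> bool" where
  "sat \<tau> C = (case C of ((x1,x2,x3),b) \<Rightarrow> sat_local C (\<tau> x1, \<tau> x2, \<tau> x3))"

definition frac_sat :: "'v eqn list \<Rightarrow> ('v \<Rightarrow> bool) \<Rightarrow> real" where
  "frac_sat Cs \<tau> = real (card {i. i < length Cs \<and> sat \<tau> (Cs ! i)}) / real (length Cs)"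

text \<open>val: maximum over assignments of the fraction of satisfied equations (only the values on the
  variables occurring matter; the set of values is finite).\<close>
definition val :: "'v eqn list \<Rightarrow> real" where
  "val Cs = Max (range (frac_sat Cs))"

definition homog :: "'v eqn \<Rightarrow> 'v eqn" where
  "homog C = (fst C, False)"

definition homog_inst :: "'v eqn list \<Rightarrow> 'v eqn list" where
  "homog_inst Cs = map homog Cs"

text \<open>Vertices of G_C: variable vertices (x |-> a) and constraint vertices alpha_C, where the
  constraint is identified by its index in the list (distinct constraints, distinct vertices).\<close>
datatype 'v vtx = VarV 'v bool | ConV nat "bool \<times> bool \<times> bool"

type_synonym 'a graph = "'a set \<times> 'a set set"

definition verts :: "'a graph \<Rightarrow> 'a set" where "verts G = fst G"
definition edges :: "'a graph \<Rightarrow> 'a set set" where "edges G = snd G"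

definition G_of :: "'v set \<Rightarrow> 'v eqn list \<Rightarrow> 'v vtx graph" where
  "G_of X Cs =
    ({VarV x a | x a. x \<in> X} \<union>
     {ConV i \<alpha> | i \<alpha>. i < length Cs \<and> sat_local (Cs ! i) \<alpha>},
     {{VarV x False, VarV x True} | x. x \<in> X} \<union>
     {{ConV i \<alpha>, ConV i \<beta>} | i \<alpha> \<beta>. i < length Cs \<and> sat_local (Cs ! i) \<alpha> \<and>
        sat_local (Cs ! i) \<beta> \<and> \<alpha> \<noteq> \<beta>} \<union>
     {{ConV i (a1,a2,a3), VarV x a} | i a1 a2 a3 x a. i < length Cs \<and>
        sat_local (Cs ! i) (a1,a2,a3) \<and>
        (case fst (Cs ! i) of (x1,x2,x3) \<Rightarrow>
           (x = x1 \<and> a = a1) \<or> (x = x2 \<and> a = a2) \<or> (x = x3 \<and> a = a3))})"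

definition GI :: "'a graph \<Rightarrow> 'b graph \<Rightarrow> real" where
  "GI G H = Max ((\<lambda>\<pi>. real (card {e \<in> edges G. \<pi> ` e \<in> edges H}) /
                       real (max (card (edges G)) (card (edges H))))
                 ` {\<pi>. bij_betw \<pi> (verts G) (verts H)})"

end

theory Submission
  imports Defs
begin

definition VE :: "'v set \<Rightarrow> 'v vtx set set" where
  "VE X = {{VarV x False, VarV x True} | x. x \<in> X}"
definition KK :: "nat \<Rightarrow> 'v eqn \<Rightarrow> 'v vtx set set" where
  "KK i C = {{ConV i \<alpha>, ConV i \<beta>} | \<alpha> \<beta>. sat_local C \<alpha> \<and> sat_local C \<beta> \<and> \<alpha> \<noteq> \<beta>}"
definition WW :: "nat \<Rightarrow> 'v eqn \<Rightarrow> 'v vtx set set" where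
  "WW i C = {{ConV i (a1,a2,a3), VarV x a} | a1 a2 a3 x a. 
        sat_local C (a1,a2,a3) \<and>
        (case fst C of (x1,x2,x3) \<Rightarrow>
           (x = x1 \<and> a = a1) \<or> (x = x2 \<and> a = a2) \<or> (x = x3 \<and> a = a3))}"
lemma e1: "{{ConV i \<alpha>, ConV i \<beta>} | i \<alpha> \<beta>. i < length Cs \<and> sat_local (Cs ! i) \<alpha> \<and>
        sat_local (Cs ! i) \<beta> \<and> \<alpha> \<noteq> \<beta>} = (\<Union>i<length Cs. KK i (Cs!i))" 
  unfolding KK_def by blast
lemma WW_I: "sat_local C (a1,a2,a3) \<Longrightarrow> 
   (case fst C of (x1,x2,x3) \<Rightarrow> (x = x1 \<and> a = a1) \<or> (x = x2 \<and> a = a2) \<or> (x = x3 \<and> a = a3)) \<Longrightarrow>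
   {ConV i (a1,a2,a3), VarV x a} \<in> WW i C"
  unfolding WW_def
  apply (rule CollectI)
  apply (rule exI[of _ a1], rule exI[of _ a2], rule exI[of _ a3], rule exI[of _ x], rule exI[of _ a])
  by auto

lemma e2: "{{ConV i (a1,a2,a3), VarV x a} | i a1 a2 a3 x a. i < length Cs \<and>
        sat_local (Cs ! i) (a1,a2,a3) \<and>
        (case fst (Cs ! i) of (x1,x2,x3) \<Rightarrow>
           (x = x1 \<and> a = a1) \<or> (x = x2 \<and> a = a2) \<or> (x = x3 \<and> a = a3))} = (\<Union>i<length Cs. WW i (Cs!i))"
     (is "?L = ?R")
proof (intro equalityI subsetI)
  fix e assume "e \<in> ?L"
  then obtain i a1 a2 a3 x a where h: "e = {ConV i (a1,a2,a3), VarV x a}" "i < length Cs"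
     "sat_local (Cs ! i) (a1,a2,a3)" "(case fst (Cs ! i) of (x1,x2,x3) \<Rightarrow>
           (x = x1 \<and> a = a1) \<or> (x = x2 \<and> a = a2) \<or> (x = x3 \<and> a = a3))"
    by (elim CollectE exE conjE) (rule that, assumption+)
  show "e \<in> ?R" unfolding h(1) by (rule UN_I[of i]) (use h in \<open>auto intro!: WW_I\<close>)
next
  fix e assume "e \<in> ?R"
  then obtain i where i: "i < length Cs" "e \<in> WW i (Cs!i)" by blast
  then obtain a1 a2 a3 x a where h: "e = {ConV i (a1,a2,a3), VarV x a}"
     "sat_local (Cs ! i) (a1,a2,a3)" "(case fst (Cs ! i) of (x1,x2,x3) \<Rightarrow>
           (x = x1 \<and> a = a1) \<or> (x = x2 \<and> a = a2) \<or> (x = x3 \<and> a = a3))"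
    unfolding WW_def by (elim CollectE exE conjE) (rule that, assumption+)
  show "e \<in> ?L" unfolding h(1) mem_Collect_eq
    apply (rule exI[of _ i], rule exI[of _ a1], rule exI[of _ a2], rule exI[of _ a3], rule exI[of _ x], rule exI[of _ a])
    using h i by auto
qed
lemma edges_G: "edges (G_of X Cs) = VE X \<union> (\<Union>i<length Cs. KK i (Cs!i)) \<union> (\<Union>i<length Cs. WW i (Cs!i))"
  unfolding edges_def G_of_def VE_def e1 e2 by simp

lemma KK_I: "sat_local C \<alpha> \<Longrightarrow> sat_local C \<beta> \<Longrightarrow> \<alpha> \<noteq> \<beta> \<Longrightarrow> {ConV i \<alpha>, ConV i \<beta>} \<in> KK i C"
  unfolding KK_def by blast

lemma KK_E: assumes "e \<in> KK i C"
  obtains \<alpha> \<beta> where "e = {ConV i \<alpha>, ConV i \<beta>}" "sat_local C \<alpha>" "sat_local C \<beta>" "\<alpha> \<noteq> \<beta>"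
  using assms unfolding KK_def by (elim CollectE exE conjE) (rule that, assumption+)

lemma WW_E: assumes "e \<in> WW i C"
  obtains a1 a2 a3 x a where "e = {ConV i (a1,a2,a3), VarV x a}" "sat_local C (a1,a2,a3)"
     "(case fst C of (x1,x2,x3) \<Rightarrow> (x = x1 \<and> a = a1) \<or> (x = x2 \<and> a = a2) \<or> (x = x3 \<and> a = a3))"
  using assms unfolding WW_def by (elim CollectE exE conjE) (rule that, assumption+)

lemma KK_explicit: "KK i ((xs,b)::'v eqn) \<supseteq> {{ConV i (False,False,b), ConV i (False,True,\<not>b)},
   {ConV i (False,False,b), ConV i (True,False,\<not>b)}, {ConV i (False,False,b), ConV i (True,True,b)},
   {ConV i (False,True,\<not>b), ConV i (True,False,\<not>b)}, {ConV i (False,True,\<not>b), ConV i (True,True,b)},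
   {ConV i (True,False,\<not>b), ConV i (True,True,b)}}"
  by (cases xs) (auto intro!: KK_I simp: sat_local_def z2add_def)

lemma card6: "card {{ConV i (False,False,b), ConV i (False,True,\<not>b)},
   {ConV i (False,False,b), ConV i (True,False,\<not>b)}, {ConV i (False,False,b), ConV i (True,True,b)},
   {ConV i (False,True,\<not>b), ConV i (True,False,\<not>b)}, {ConV i (False,True,\<not>b), ConV i (True,True,b)},
   {ConV i (True,False,\<not>b), ConV i (True,True,b)::'v vtx}} = 6"
  by (cases b) (simp_all add: doubleton_eq_iff)

lemma KK_sub: "KK i C \<subseteq> (\<lambda>p. {ConV i (fst p), ConV i (snd p)}) ` UNIV"
proof
  fix e assume "e \<in> KK i C"
  then obtain \<alpha> \<beta> where "e = {ConV i \<alpha>, ConV i \<beta>}" by (rule KK_E)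
  thus "e \<in> (\<lambda>p. {ConV i (fst p), ConV i (snd p)}) ` UNIV" by (intro image_eqI[of _ _ "(\<alpha>,\<beta>)"]) auto
qed

lemma KK_finite: "finite (KK i C)"
  using KK_sub by (rule finite_subset) (rule finite_imageI, simp)

lemma KK_card: "card (KK i C) \<ge> 6"
proof -
  obtain xs b where C: "C = (xs,b)" by (cases C)
  show ?thesis unfolding C using card_mono[OF KK_finite KK_explicit] card6 by metis
qed

definition wg :: "nat \<Rightarrow> 'v eqn \<Rightarrow> bool \<times> bool \<times> nat \<Rightarrow> 'v vtx set" where
  "wg i C t = (case C of ((x1,x2,x3),b) \<Rightarrow> case t of (p,q,k) \<Rightarrow>
     {ConV i (p,q,(p\<noteq>q)\<noteq>b), VarV (if k=0 then x1 else if k=1 then x2 else x3)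
        (if k=0 then p else if k=1 then q else (p\<noteq>q)\<noteq>b)})"

definition WL :: "(bool \<times> bool \<times> nat) set" where "WL = UNIV \<times> UNIV \<times> {0,1,2}"

lemma WL_card: "card WL = 12" "finite WL"
  unfolding WL_def by (simp_all add: card_cartesian_product)

lemma WW_sub: "WW i C \<subseteq> wg i C ` WL"
proof
  fix e assume "e \<in> WW i C"
  then obtain a1 a2 a3 x a where h: "e = {ConV i (a1,a2,a3), VarV x a}" "sat_local C (a1,a2,a3)"
     "(case fst C of (x1,x2,x3) \<Rightarrow> (x = x1 \<and> a = a1) \<or> (x = x2 \<and> a = a2) \<or> (x = x3 \<and> a = a3))"
    by (rule WW_E)
  obtain x1 x2 x3 b where C: "C = ((x1,x2,x3),b)" by (cases C) auto
  have a3: "a3 = ((a1\<noteq>a2)\<noteq>b)" using h(2) unfolding C sat_local_def z2add_def by auto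
  have c: "(x = x1 \<and> a = a1) \<or> (x = x2 \<and> a = a2) \<or> (x = x3 \<and> a = a3)" using h(3) C by simp
  show "e \<in> wg i C ` WL"
  proof (cases "x = x1 \<and> a = a1")
    case True thus ?thesis unfolding h(1) by (intro image_eqI[of _ _ "(a1,a2,0)"]) (auto simp: wg_def C WL_def a3)
  next
    case F1: False show ?thesis
    proof (cases "x = x2 \<and> a = a2")
      case True thus ?thesis unfolding h(1) by (intro image_eqI[of _ _ "(a1,a2,1)"]) (auto simp: wg_def C WL_def a3)
    next
      case False
      hence "x = x3 \<and> a = a3" using c F1 by blast
      thus ?thesis unfolding h(1) by (intro image_eqI[of _ _ "(a1,a2,2)"]) (auto simp: wg_def C WL_def a3)
    qed
  qed
qed

lemma WW_finite: "finite (WW i C)"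
  using WW_sub by (rule finite_subset) (rule finite_imageI, rule WL_card)

lemma WW_card_le: "card (WW i C) \<le> 12"
  using card_mono[OF finite_imageI[OF WL_card(2)] WW_sub[of i C]] card_image_le[OF WL_card(2), of "wg i C"] WL_card(1)
  by linarith

lemma WW_sup: "wg i C ` WL \<subseteq> WW i C"
proof
  fix e assume "e \<in> wg i C ` WL"
  then obtain p q k where k: "k \<in> {0,1,2}" and e: "e = wg i C (p,q,k)" unfolding WL_def by auto
  obtain x1 x2 x3 b where C: "C = ((x1,x2,x3),b)" by (cases C) auto
  show "e \<in> WW i C" unfolding e wg_def C prod.case
    by (rule WW_I) (use k in \<open>auto simp: sat_local_def z2add_def\<close>)
qed

lemma wg_inj: assumes "fst C = (x1,x2,x3)" "x1 \<noteq> x2" "x1 \<noteq> x3" "x2 \<noteq> x3"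
  shows "inj_on (wg i C) WL"
proof (rule inj_onI)
  fix s t assume s: "s \<in> WL" and t: "t \<in> WL" and eq: "wg i C s = wg i C t"
  obtain b where C: "C = ((x1,x2,x3),b)" using assms(1) by (cases C) auto
  obtain p q k where sd: "s = (p,q,k)" by (cases s) auto
  obtain p' q' k' where td: "t = (p',q',k')" by (cases t) auto
  have k: "k \<in> {0,1,2}" "k' \<in> {0,1,2}" using s t sd td unfolding WL_def by auto
  from eq have "ConV i (p,q,(p\<noteq>q)\<noteq>b) = ConV i (p',q',(p'\<noteq>q')\<noteq>b) \<and>
      VarV (if k=0 then x1 else if k=1 then x2 else x3) (if k=0 then p else if k=1 then q else (p\<noteq>q)\<noteq>b)
      = VarV (if k'=0 then x1 else if k'=1 then x2 else x3) (if k'=0 then p' else if k'=1 then q' else (p'\<noteq>q')\<noteq>b)"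
    unfolding wg_def C sd td by (simp add: doubleton_eq_iff)
  hence "p = p'" "q = q'" "(if k=0 then x1 else if k=1 then x2 else x3) = (if k'=0 then x1 else if k'=1 then x2 else x3)"
    by auto
  hence "k = k'" using k assms(2-4) by (auto split: if_splits)
  thus "s = t" using sd td \<open>p = p'\<close> \<open>q = q'\<close> by simp
qed

lemma WW_card: assumes "fst C = (x1,x2,x3)" "x1 \<noteq> x2" "x1 \<noteq> x3" "x2 \<noteq> x3"
  shows "card (WW i C) = 12"
proof -
  have "WW i C = wg i C ` WL" using WW_sub WW_sup by blast
  thus ?thesis using card_image[OF wg_inj[OF assms]] WL_card by simp
qed



definition ft :: "('v \<Rightarrow> bool) \<Rightarrow> 'v eqn \<Rightarrow> bool \<times> bool \<times> bool \<Rightarrow> bool \<times> bool \<times> bool" where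
  "ft \<tau> C \<alpha> = (case C of ((x1,x2,x3),b) \<Rightarrow> case \<alpha> of (a1,a2,a3) \<Rightarrow>
      ((a1 \<noteq> \<tau> x1) \<noteq> (\<not> sat \<tau> C), a2 \<noteq> \<tau> x2, a3 \<noteq> \<tau> x3))"

definition piv :: "('v \<Rightarrow> bool) \<Rightarrow> 'v eqn list \<Rightarrow> 'v vtx \<Rightarrow> 'v vtx" where
  "piv \<tau> Cs v = (case v of VarV x a \<Rightarrow> VarV x (a \<noteq> \<tau> x)
     | ConV i \<alpha> \<Rightarrow> if i < length Cs then ConV i (ft \<tau> (Cs!i) \<alpha>) else ConV i \<alpha>)"

lemma piv_Var[simp]: "piv \<tau> Cs (VarV x a) = VarV x (a \<noteq> \<tau> x)" by (simp add: piv_def)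
lemma piv_Con[simp]: "i < length Cs \<Longrightarrow> piv \<tau> Cs (ConV i \<alpha>) = ConV i (ft \<tau> (Cs!i) \<alpha>)"
  by (simp add: piv_def)

lemma ft_inv[simp]: "ft \<tau> C (ft \<tau> C \<alpha>) = \<alpha>"
  by (cases C; cases \<alpha>) (auto simp: ft_def)

lemma ft_sat: "sat_local (homog C) (ft \<tau> C \<alpha>) \<longleftrightarrow> sat_local C \<alpha>"
  by (cases C; cases \<alpha>) (auto simp: ft_def sat_local_def sat_def homog_def z2add_def)

lemma ft_sat': "sat_local (homog C) \<alpha> \<longleftrightarrow> sat_local C (ft \<tau> C \<alpha>)"
  using ft_sat[of C \<tau> "ft \<tau> C \<alpha>"] by simp

lemma ft_inj: "ft \<tau> C \<alpha> = ft \<tau> C \<beta> \<longleftrightarrow> \<alpha> = \<beta>"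
  by (metis ft_inv)

lemma ft_satC: "sat \<tau> C \<Longrightarrow> fst C = (x1,x2,x3) \<Longrightarrow> ft \<tau> C (a1,a2,a3) = (a1 \<noteq> \<tau> x1, a2 \<noteq> \<tau> x2, a3 \<noteq> \<tau> x3)"
  by (cases C) (auto simp: ft_def)

lemma piv_inv[simp]: "piv \<tau> Cs (piv \<tau> Cs v) = v"
  by (cases v) (auto simp: piv_def)

lemma piv_img_inv[simp]: "piv \<tau> Cs ` (piv \<tau> Cs ` e) = e"
  by (simp add: image_image)

lemma homog_fst[simp]: "fst (homog C) = fst C" by (simp add: homog_def)

lemma VE_trans: "e \<in> VE X \<Longrightarrow> piv \<tau> Cs ` e \<in> VE X"
  unfolding VE_def
proof (elim CollectE exE conjE)
  fix x assume e: "e = {VarV x False, VarV x True}" and x: "x \<in> X"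
  have "piv \<tau> Cs ` e = {VarV x False, VarV x True}" unfolding e by (cases "\<tau> x") auto
  thus "piv \<tau> Cs ` e \<in> {{VarV x False, VarV x True} |x. x \<in> X}" using x by blast
qed

lemma KK_trans: assumes "i < length Cs" "e \<in> KK i (Cs!i)"
  shows "piv \<tau> Cs ` e \<in> KK i (homog (Cs!i))"
proof -
  obtain \<alpha> \<beta> where h: "e = {ConV i \<alpha>, ConV i \<beta>}" "sat_local (Cs!i) \<alpha>" "sat_local (Cs!i) \<beta>" "\<alpha> \<noteq> \<beta>"
    using assms(2) by (rule KK_E)
  have "piv \<tau> Cs ` e = {ConV i (ft \<tau> (Cs!i) \<alpha>), ConV i (ft \<tau> (Cs!i) \<beta>)}" using assms(1) h(1) by simp
  thus ?thesis using h by (simp add: KK_I ft_sat ft_inj)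
qed

lemma KK_trans': assumes "i < length Cs" "e \<in> KK i (homog (Cs!i))"
  shows "piv \<tau> Cs ` e \<in> KK i (Cs!i)"
proof -
  obtain \<alpha> \<beta> where h: "e = {ConV i \<alpha>, ConV i \<beta>}" "sat_local (homog (Cs!i)) \<alpha>" "sat_local (homog (Cs!i)) \<beta>" "\<alpha> \<noteq> \<beta>"
    using assms(2) by (rule KK_E)
  have "piv \<tau> Cs ` e = {ConV i (ft \<tau> (Cs!i) \<alpha>), ConV i (ft \<tau> (Cs!i) \<beta>)}" using assms(1) h(1) by simp
  thus ?thesis using h ft_sat'[of "Cs!i" \<alpha> \<tau>] ft_sat'[of "Cs!i" \<beta> \<tau>] by (simp add: KK_I ft_inj)
qed

lemma WW_trans: assumes "i < length Cs" "sat \<tau> (Cs!i)" "e \<in> WW i (Cs!i)"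
  shows "piv \<tau> Cs ` e \<in> WW i (homog (Cs!i))"
proof -
  obtain a1 a2 a3 x a where h: "e = {ConV i (a1,a2,a3), VarV x a}" "sat_local (Cs!i) (a1,a2,a3)"
     "(case fst (Cs!i) of (x1,x2,x3) \<Rightarrow> (x = x1 \<and> a = a1) \<or> (x = x2 \<and> a = a2) \<or> (x = x3 \<and> a = a3))"
    using assms(3) by (rule WW_E)
  obtain x1 x2 x3 where f: "fst (Cs!i) = (x1,x2,x3)" by (cases "fst (Cs!i)") auto
  have ft: "ft \<tau> (Cs!i) (a1,a2,a3) = (a1 \<noteq> \<tau> x1, a2 \<noteq> \<tau> x2, a3 \<noteq> \<tau> x3)" using ft_satC[OF assms(2) f] .
  have "piv \<tau> Cs ` e = {ConV i (a1 \<noteq> \<tau> x1, a2 \<noteq> \<tau> x2, a3 \<noteq> \<tau> x3), VarV x (a \<noteq> \<tau> x)}"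
    using assms(1) h(1) ft by simp
  moreover have "sat_local (homog (Cs!i)) (a1 \<noteq> \<tau> x1, a2 \<noteq> \<tau> x2, a3 \<noteq> \<tau> x3)"
    using h(2) ft ft_sat by metis
  moreover have "(case fst (homog (Cs!i)) of (x1',x2',x3') \<Rightarrow> (x = x1' \<and> (a \<noteq> \<tau> x) = (a1 \<noteq> \<tau> x1)) \<or>
       (x = x2' \<and> (a \<noteq> \<tau> x) = (a2 \<noteq> \<tau> x2)) \<or> (x = x3' \<and> (a \<noteq> \<tau> x) = (a3 \<noteq> \<tau> x3)))"
    using h(3) f by auto
  ultimately show ?thesis by (simp add: WW_I)
qed

lemma WW_trans': assumes "i < length Cs" "sat \<tau> (Cs!i)" "e \<in> WW i (homog (Cs!i))"
  shows "piv \<tau> Cs ` e \<in> WW i (Cs!i)"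
proof -
  obtain a1 a2 a3 x a where h: "e = {ConV i (a1,a2,a3), VarV x a}" "sat_local (homog (Cs!i)) (a1,a2,a3)"
     "(case fst (homog (Cs!i)) of (x1,x2,x3) \<Rightarrow> (x = x1 \<and> a = a1) \<or> (x = x2 \<and> a = a2) \<or> (x = x3 \<and> a = a3))"
    using assms(3) by (rule WW_E)
  obtain x1 x2 x3 where f: "fst (Cs!i) = (x1,x2,x3)" by (cases "fst (Cs!i)") auto
  have ft: "ft \<tau> (Cs!i) (a1,a2,a3) = (a1 \<noteq> \<tau> x1, a2 \<noteq> \<tau> x2, a3 \<noteq> \<tau> x3)" using ft_satC[OF assms(2) f] .
  have "piv \<tau> Cs ` e = {ConV i (a1 \<noteq> \<tau> x1, a2 \<noteq> \<tau> x2, a3 \<noteq> \<tau> x3), VarV x (a \<noteq> \<tau> x)}"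
    using assms(1) h(1) ft by simp
  moreover have "sat_local (Cs!i) (a1 \<noteq> \<tau> x1, a2 \<noteq> \<tau> x2, a3 \<noteq> \<tau> x3)"
    using h(2) ft ft_sat' by metis
  moreover have "(case fst (Cs!i) of (x1',x2',x3') \<Rightarrow> (x = x1' \<and> (a \<noteq> \<tau> x) = (a1 \<noteq> \<tau> x1)) \<or>
       (x = x2' \<and> (a \<noteq> \<tau> x) = (a2 \<noteq> \<tau> x2)) \<or> (x = x3' \<and> (a \<noteq> \<tau> x) = (a3 \<noteq> \<tau> x3)))"
    using h(3) f by auto
  ultimately show ?thesis by (simp add: WW_I)
qed



lemma homog_nth: "i < length Cs \<Longrightarrow> homog_inst Cs ! i = homog (Cs ! i)"
  "length (homog_inst Cs) = length Cs"
  by (auto simp: homog_inst_def)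

lemma verts_Var: "VarV x a \<in> verts (G_of X Cs) \<longleftrightarrow> x \<in> X"
  unfolding verts_def G_of_def by auto
lemma verts_Con: "ConV i \<alpha> \<in> verts (G_of X Cs) \<longleftrightarrow> i < length Cs \<and> sat_local (Cs!i) \<alpha>"
  unfolding verts_def G_of_def by (cases \<alpha>) auto

lemma piv_GH: "v \<in> verts (G_of X Cs) \<Longrightarrow> piv \<tau> Cs v \<in> verts (G_of X (homog_inst Cs))"
  by (cases v) (auto simp: verts_Var verts_Con homog_nth ft_sat)

lemma piv_HG: "v \<in> verts (G_of X (homog_inst Cs)) \<Longrightarrow> piv \<tau> Cs v \<in> verts (G_of X Cs)"
  by (cases v) (auto simp: verts_Var verts_Con homog_nth ft_sat'[symmetric])

lemma piv_bij: "bij_betw (piv \<tau> Cs) (verts (G_of X Cs)) (verts (G_of X (homog_inst Cs)))"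
  by (rule bij_betw_byWitness[where f'="piv \<tau> Cs"]) (auto intro: piv_GH piv_HG)

lemma edges_H: "edges (G_of X (homog_inst Cs)) = VE X \<union> (\<Union>i<length Cs. KK i (homog (Cs!i))) \<union>
    (\<Union>i<length Cs. WW i (homog (Cs!i)))"
proof -
  have a: "(\<Union>i<length Cs. KK i (homog_inst Cs ! i)) = (\<Union>i<length Cs. KK i (homog (Cs!i)))"
    by (rule SUP_cong) (simp_all add: homog_nth)
  have b: "(\<Union>i<length Cs. WW i (homog_inst Cs ! i)) = (\<Union>i<length Cs. WW i (homog (Cs!i)))"
    by (rule SUP_cong) (simp_all add: homog_nth)
  show ?thesis unfolding edges_G homog_nth(2) a b ..
qed

lemma VE_finite: "finite X \<Longrightarrow> finite (VE X)"
proof -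
  assume "finite X"
  have "VE X = (\<lambda>x. {VarV x False, VarV x True}) ` X" unfolding VE_def by blast
  thus ?thesis using \<open>finite X\<close> by simp
qed

lemma edges_finite: "finite X \<Longrightarrow> finite (edges (G_of X Cs))"
  unfolding edges_G by (simp add: VE_finite KK_finite WW_finite)

lemma KK_con: "e \<in> KK i C \<Longrightarrow> v \<in> e \<Longrightarrow> \<exists>\<alpha>. v = ConV i \<alpha>"
  by (erule KK_E) auto
lemma KK_ex: "e \<in> KK i C \<Longrightarrow> \<exists>\<alpha>. ConV i \<alpha> \<in> e"
  by (erule KK_E) auto
lemma WW_con: "e \<in> WW i C \<Longrightarrow> v \<in> e \<Longrightarrow> (\<exists>\<alpha>. v = ConV i \<alpha>) \<or> (\<exists>x a. v = VarV x a)"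
  by (erule WW_E) auto
lemma WW_ex: "e \<in> WW i C \<Longrightarrow> \<exists>\<alpha>. ConV i \<alpha> \<in> e"
  by (erule WW_E) auto
lemma WW_exV: "e \<in> WW i C \<Longrightarrow> \<exists>x a. VarV x a \<in> e"
  by (erule WW_E) auto

lemma KK_WW_disj: "KK i C \<inter> WW j D = {}"
proof (rule ccontr)
  assume "KK i C \<inter> WW j D \<noteq> {}"
  then obtain e where "e \<in> KK i C" "e \<in> WW j D" by blast
  then obtain x a where "VarV x a \<in> e" using WW_exV by blast
  thus False using KK_con[OF \<open>e \<in> KK i C\<close>] by blast
qed

lemma F_disj: assumes ij: "i \<noteq> j" and sub: "A \<subseteq> WW i C" "B \<subseteq> WW j D"
  shows "(KK i C \<union> A) \<inter> (KK j D \<union> B) = {}"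
proof (rule ccontr)
  assume "(KK i C \<union> A) \<inter> (KK j D \<union> B) \<noteq> {}"
  then obtain e where e1: "e \<in> KK i C \<or> e \<in> WW i C" and e2: "e \<in> KK j D \<or> e \<in> WW j D" using sub by blast
  obtain \<alpha> where a: "ConV i \<alpha> \<in> e" using e1 KK_ex WW_ex by blast
  show False using e2
  proof
    assume "e \<in> KK j D" thus False using KK_con[OF _ a] ij by blast
  next
    assume "e \<in> WW j D" thus False using WW_con[OF _ a] ij by blast
  qed
qed



lemma count_le: "card {i. i < n \<and> P i} \<le> n"
  using card_mono[of "{..<n}" "{i. i < n \<and> P i}"] by auto

lemma val_attained:
  assumes "Cs \<noteq> []"
  obtains \<tau> where "frac_sat Cs \<tau> = val Cs"
proof -
  have "range (frac_sat Cs) \<subseteq> (\<lambda>k. real k / real (length Cs)) ` {..length Cs}"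
  proof
    fix y assume "y \<in> range (frac_sat Cs)"
    then obtain \<tau> where y: "y = frac_sat Cs \<tau>" by blast
    show "y \<in> (\<lambda>k. real k / real (length Cs)) ` {..length Cs}"
      unfolding y frac_sat_def by (rule imageI) (simp add: count_le)
  qed
  hence "finite (range (frac_sat Cs))" by (rule finite_subset) simp
  hence "val Cs \<in> range (frac_sat Cs)" unfolding val_def by (rule Max_in) simp
  thus ?thesis using that by auto
qed

lemma GI_ge:
  assumes "finite (edges G)" "bij_betw \<pi> (verts G) (verts H)"
  shows "real (card {e \<in> edges G. \<pi> ` e \<in> edges H}) / real (max (card (edges G)) (card (edges H))) \<le> GI G H"
proof -
  let ?D = "real (max (card (edges G)) (card (edges H)))"
  let ?f = "\<lambda>\<pi>. real (card {e \<in> edges G. \<pi> ` e \<in> edges H}) / ?D"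
  have "?f ` {\<pi>. bij_betw \<pi> (verts G) (verts H)} \<subseteq> (\<lambda>k. real k / ?D) ` {..card (edges G)}"
  proof
    fix y assume "y \<in> ?f ` {\<pi>. bij_betw \<pi> (verts G) (verts H)}"
    then obtain \<sigma> where y: "y = ?f \<sigma>" by blast
    have "card {e \<in> edges G. \<sigma> ` e \<in> edges H} \<le> card (edges G)"
      by (rule card_mono[OF assms(1)]) blast
    thus "y \<in> (\<lambda>k. real k / ?D) ` {..card (edges G)}" using y by blast
  qed
  hence "finite (?f ` {\<pi>. bij_betw \<pi> (verts G) (verts H)})" by (rule finite_subset) simp
  moreover have "?f \<pi> \<in> ?f ` {\<pi>. bij_betw \<pi> (verts G) (verts H)}" using assms(2) by blast
  ultimately show ?thesis unfolding GI_def by (rule Max_ge)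
qed

lemma final_arith:
  fixes p eg eh s u m \<epsilon> :: real
  assumes "p \<ge> 6*m + 12*s" "eg \<le> p + 12*u" "eh \<le> p + 12*u" "s + u = m" "s / m \<ge> 1 - \<epsilon>" "m > 0"
    "p \<le> eg" "u \<ge> 0" "s \<ge> 0"
  shows "p / max eg eh \<ge> 1 - 2*\<epsilon>/3"
proof -
  have h1: "s \<ge> (1 - \<epsilon>) * m" using assms(5,6) by (simp add: field_simps)
  hence h1': "u \<le> \<epsilon> * m" using assms(4) by (simp add: algebra_simps)
  have e0: "\<epsilon> \<ge> 0"
  proof (rule ccontr)
    assume "\<not> \<epsilon> \<ge> 0" hence "\<epsilon> * m < 0" using assms(6) by (simp add: mult_neg_pos)
    thus False using h1' assms(8) by linarith
  qed
  have h3: "\<epsilon> * (p + 12*u) \<ge> \<epsilon> * (18*m)"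
    by (rule mult_left_mono) (use assms e0 in auto)
  have h4: "(2*\<epsilon>/3) * (p + 12*u) \<ge> 12 * u" using h3 h1' by (simp add: algebra_simps)
  have pos: "p + 12*u > 0" using assms by linarith
  have h5: "p / (p + 12*u) \<ge> 1 - 2*\<epsilon>/3"
    using h4 pos by (simp add: field_simps)
  have p0: "p > 0" using assms by linarith
  have D1: "max eg eh \<ge> p" using assms by linarith
  have D2: "max eg eh \<le> p + 12*u" using assms by linarith
  have "p / max eg eh \<ge> p / (p + 12*u)"
    by (rule divide_left_mono[OF D2]) (use p0 D1 pos in auto)
  thus ?thesis using h5 by linarith
qed



theorem lemma4p1:
  fixes X :: "'v set" and Cs :: "'v eqn list" and \<epsilon> :: real
  assumes "is_3xor X Cs"
    and "Cs \<noteq> []"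
    and "val Cs \<ge> 1 - \<epsilon>"
  shows "GI (G_of X Cs) (G_of X (homog_inst Cs)) \<ge> 1 - 2 * \<epsilon> / 3"
proof -
  define m where "m = length Cs"
  have m0: "m > 0" using assms(2) unfolding m_def by simp
  have finX: "finite X" using assms(1) unfolding is_3xor_def by blast
  obtain \<tau> where \<tau>: "frac_sat Cs \<tau> = val Cs" using val_attained[OF assms(2)] by blast
  define S where "S = {i. i < length Cs \<and> sat \<tau> (Cs!i)}"
  define U where "U = {i. i < length Cs \<and> \<not> sat \<tau> (Cs!i)}"
  have SU: "card S + card U = m"
  proof -
    have "S \<union> U = {..<m}" "S \<inter> U = {}" unfolding S_def U_def m_def by auto
    moreover have "finite S" "finite U" unfolding S_def U_def by auto
    ultimately show ?thesis using card_Un_disjoint[of S U] by simp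
  qed
  have finU: "finite U" unfolding U_def by auto
  have sfrac: "real (card S) / real m \<ge> 1 - \<epsilon>"
    using \<tau> assms(3) unfolding frac_sat_def S_def m_def by simp
  define G where "G = G_of X Cs"
  define H where "H = G_of X (homog_inst Cs)"
  define \<pi> where "\<pi> = piv \<tau> Cs"
  define P where "P = {e \<in> edges G. \<pi> ` e \<in> edges H}"
  have bij: "bij_betw \<pi> (verts G) (verts H)" unfolding \<pi>_def G_def H_def by (rule piv_bij)
  have finG: "finite (edges G)" unfolding G_def using finX by (rule edges_finite)
  have finH: "finite (edges H)" unfolding H_def using finX by (rule edges_finite)
  have PG: "P \<subseteq> edges G" unfolding P_def by blast
  have finP: "finite P" using finite_subset[OF PG finG] .
  have EG: "edges G = VE X \<union> (\<Union>i<m. KK i (Cs!i)) \<union> (\<Union>i<m. WW i (Cs!i))"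
    unfolding G_def m_def by (rule edges_G)
  have EH: "edges H = VE X \<union> (\<Union>i<m. KK i (homog (Cs!i))) \<union> (\<Union>i<m. WW i (homog (Cs!i)))"
    unfolding H_def m_def by (rule edges_H)
  have P_VE: "e \<in> P" if "e \<in> VE X" for e
  proof -
    have "\<pi> ` e \<in> VE X" unfolding \<pi>_def using that by (rule VE_trans)
    thus ?thesis using that unfolding P_def EG EH by blast
  qed
  have P_KK: "e \<in> P" if "i < m" "e \<in> KK i (Cs!i)" for e i
  proof -
    have "\<pi> ` e \<in> KK i (homog (Cs!i))" unfolding \<pi>_def using that unfolding m_def by (rule KK_trans)
    thus ?thesis using that unfolding P_def EG EH by blast
  qed
  have P_WW: "e \<in> P" if "i < m" "sat \<tau> (Cs!i)" "e \<in> WW i (Cs!i)" for e i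
  proof -
    have "\<pi> ` e \<in> WW i (homog (Cs!i))" unfolding \<pi>_def using that unfolding m_def by (rule WW_trans)
    thus ?thesis using that unfolding P_def EG EH by blast
  qed
  have inv: "\<pi> ` (\<pi> ` e) = e" for e unfolding \<pi>_def by simp
  have Q: "e \<in> (image \<pi>) ` P" if "\<pi> ` e \<in> P" for e
    using that inv[of e] by (metis image_eqI)
  have G_sub: "edges G \<subseteq> P \<union> (\<Union>i\<in>U. WW i (Cs!i))"
  proof
    fix e assume e: "e \<in> edges G"
    show "e \<in> P \<union> (\<Union>i\<in>U. WW i (Cs!i))"
      using e unfolding EG
    proof (elim UnE UN_E)
      assume "e \<in> VE X" thus ?thesis using P_VE by blast
    next
      fix i assume "i \<in> {..<m}" "e \<in> KK i (Cs!i)" thus ?thesis using P_KK by blast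
    next
      fix i assume i: "i \<in> {..<m}" and w: "e \<in> WW i (Cs!i)"
      show ?thesis
      proof (cases "sat \<tau> (Cs!i)")
        case True thus ?thesis using P_WW i w by blast
      next
        case False hence "i \<in> U" using i unfolding U_def m_def by simp
        thus ?thesis using w by blast
      qed
    qed
  qed
  have H_sub: "edges H \<subseteq> (image \<pi>) ` P \<union> (\<Union>i\<in>U. WW i (homog (Cs!i)))"
  proof
    fix e assume e: "e \<in> edges H"
    show "e \<in> (image \<pi>) ` P \<union> (\<Union>i\<in>U. WW i (homog (Cs!i)))"
      using e unfolding EH
    proof (elim UnE UN_E)
      assume "e \<in> VE X"
      hence "\<pi> ` e \<in> VE X" unfolding \<pi>_def by (rule VE_trans)
      hence "\<pi> ` e \<in> P" by (rule P_VE)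
      thus ?thesis using Q by blast
    next
      fix i assume i: "i \<in> {..<m}" and k: "e \<in> KK i (homog (Cs!i))"
      have "\<pi> ` e \<in> KK i (Cs!i)" unfolding \<pi>_def using i k unfolding m_def by (intro KK_trans') auto
      hence "\<pi> ` e \<in> P" using P_KK i by blast
      thus ?thesis using Q by blast
    next
      fix i assume i: "i \<in> {..<m}" and w: "e \<in> WW i (homog (Cs!i))"
      show ?thesis
      proof (cases "sat \<tau> (Cs!i)")
        case True
        have "\<pi> ` e \<in> WW i (Cs!i)" unfolding \<pi>_def using i True w unfolding m_def by (intro WW_trans') auto
        hence "\<pi> ` e \<in> P" using P_WW i True by blast
        thus ?thesis using Q by blast
      next
        case False hence "i \<in> U" using i unfolding U_def m_def by simp
        thus ?thesis using w by blast
      qed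
    qed
  qed
  have cUW: "card (\<Union>i\<in>U. WW i (C' i)) \<le> 12 * card U" for C'
  proof -
    have "card (\<Union>i\<in>U. WW i (C' i)) \<le> (\<Sum>i\<in>U. card (WW i (C' i)))" by (rule card_UN_le[OF finU])
    also have "\<dots> \<le> of_nat (card U) * 12" by (rule sum_bounded_above) (rule WW_card_le)
    finally show ?thesis by simp
  qed
  have cG: "card (edges G) \<le> card P + 12 * card U"
  proof -
    have "card (edges G) \<le> card (P \<union> (\<Union>i\<in>U. WW i (Cs!i)))"
      by (rule card_mono[OF _ G_sub]) (simp add: finP finU WW_finite)
    also have "\<dots> \<le> card P + card (\<Union>i\<in>U. WW i (Cs!i))" by (rule card_Un_le)
    finally show ?thesis using cUW[of "\<lambda>i. Cs!i"] by simp
  qed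
  have cH: "card (edges H) \<le> card P + 12 * card U"
  proof -
    have "card (edges H) \<le> card ((image \<pi>) ` P \<union> (\<Union>i\<in>U. WW i (homog (Cs!i))))"
      by (rule card_mono[OF _ H_sub]) (simp add: finP finU WW_finite)
    also have "\<dots> \<le> card ((image \<pi>) ` P) + card (\<Union>i\<in>U. WW i (homog (Cs!i)))" by (rule card_Un_le)
    also have "card ((image \<pi>) ` P) \<le> card P" by (rule card_image_le[OF finP])
    finally show ?thesis using cUW[of "\<lambda>i. homog (Cs!i)"] by simp
  qed
  define F where "F i = KK i (Cs!i) \<union> (if sat \<tau> (Cs!i) then WW i (Cs!i) else {})" for i
  have FP: "(\<Union>i<m. F i) \<subseteq> P"
  proof
    fix e assume "e \<in> (\<Union>i<m. F i)"
    then obtain i where i: "i < m" and e: "e \<in> F i" by blast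
    show "e \<in> P" using e unfolding F_def
    proof (elim UnE)
      assume "e \<in> KK i (Cs!i)" thus ?thesis using P_KK i by blast
    next
      assume "e \<in> (if sat \<tau> (Cs!i) then WW i (Cs!i) else {})"
      thus ?thesis using P_WW i by (cases "sat \<tau> (Cs!i)") auto
    qed
  qed
  have Ffin: "finite (F i)" for i unfolding F_def by (simp add: KK_finite WW_finite)
  have Fdisj: "\<forall>i\<in>{..<m}. \<forall>j\<in>{..<m}. i \<noteq> j \<longrightarrow> F i \<inter> F j = {}"
    unfolding F_def by (intro ballI impI F_disj) auto
  have Fcard: "card (F i) \<ge> 6 + (if sat \<tau> (Cs!i) then 12 else 0)" if "i < m" for i
  proof (cases "sat \<tau> (Cs!i)")
    case True
    have "Cs!i \<in> set Cs" using that unfolding m_def by simp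
    obtain xs b where Cb: "Cs!i = (xs,b)" by (cases "Cs!i")
    obtain x1 x2 x3 where xs: "xs = (x1,x2,x3)" by (cases xs)
    have "case Cs!i of ((x1,x2,x3),b) \<Rightarrow>
        x1 \<in> X \<and> x2 \<in> X \<and> x3 \<in> X \<and> x1 \<noteq> x2 \<and> x1 \<noteq> x3 \<and> x2 \<noteq> x3"
      using conjunct2[OF assms(1)[unfolded is_3xor_def]] \<open>Cs!i \<in> set Cs\<close> by (rule bspec)
    hence C: "Cs!i = ((x1,x2,x3),b)" "x1 \<noteq> x2" "x1 \<noteq> x3" "x2 \<noteq> x3" using Cb xs by auto
    have "card (F i) = card (KK i (Cs!i)) + card (WW i (Cs!i))"
      unfolding F_def using True by (simp add: card_Un_disjoint KK_finite WW_finite KK_WW_disj)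
    moreover have "card (WW i (Cs!i)) = 12" by (rule WW_card[of _ x1 x2 x3]) (use C in auto)
    ultimately show ?thesis using KK_card[of i "Cs!i"] True by simp
  next
    case False
    thus ?thesis unfolding F_def using KK_card[of i "Cs!i"] by simp
  qed
  have cP: "card P \<ge> 6 * m + 12 * card S"
  proof -
    have "card (\<Union>i<m. F i) = (\<Sum>i<m. card (F i))"
      by (rule card_UN_disjoint) (use Ffin Fdisj in auto)
    also have "\<dots> \<ge> (\<Sum>i<m. 6 + (if sat \<tau> (Cs!i) then 12 else 0))"
      by (rule sum_mono) (use Fcard in auto)
    moreover have "(\<Sum>i<m. 6 + (if sat \<tau> (Cs!i) then 12 else (0::nat))) = 6 * m + 12 * card S"
    proof -
      have "(\<Sum>i<m. (if sat \<tau> (Cs!i) then 12 else (0::nat))) = (\<Sum>i\<in>{i\<in>{..<m}. sat \<tau> (Cs!i)}. 12)"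
        by (rule sum.inter_filter[symmetric]) simp
      also have "{i\<in>{..<m}. sat \<tau> (Cs!i)} = S" unfolding S_def m_def by auto
      finally show ?thesis by (simp add: sum.distrib)
    qed
    moreover have "card (\<Union>i<m. F i) \<le> card P" by (rule card_mono[OF finP FP])
    ultimately show ?thesis by linarith
  qed
  have PcG: "card P \<le> card (edges G)" by (rule card_mono[OF finG PG])
  have main: "real (card P) / real (max (card (edges G)) (card (edges H))) \<ge> 1 - 2*\<epsilon>/3"
  proof -
    have "real (card P) / max (real (card (edges G))) (real (card (edges H))) \<ge> 1 - 2*\<epsilon>/3"
      by (rule final_arith[where s="real (card S)" and u="real (card U)" and m="real m"])
         (use cP cG cH SU sfrac m0 PcG in \<open>simp_all add: of_nat_add[symmetric] del: of_nat_add\<close>)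
    thus ?thesis by (simp add: of_nat_max)
  qed
  have "real (card P) / real (max (card (edges G)) (card (edges H))) \<le> GI G H"
    unfolding P_def by (rule GI_ge[OF finG bij])
  thus ?thesis using main unfolding G_def H_def by linarith
qed


end
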